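(* Let $G$ be a finite group and let $H=A\oplus B$ be the algebra constructed below. Then $H$ is a semisimple associative algebra, $A$ is a central subalgebra of $H$, and $B$ is a two-sided ideal of $H$.
   Context: Let $\mathbb C[G]$ be the group algebra and $A$ its center, with basis $E_\alpha=\sum_{g\in\alpha}g$ over conjugacy classes $\alpha$. Let $M(G)=\operatorname{End}(\mathbb C[G])$ with matrix units $E_{g_1,g_2}$ with respect to the basis $G$ ($E_{g_1,g_2}(h)=\delta_{g_2,h}g_1$). Two ordered pairs $(g_1,g_2),(g'_1,g'_2)$ are conjugate if $g'_i=gg_ig^{-1}$ for some $g\in G$. For each conjugacy class $\beta$ of ordered pairs $(s_1,s_2)$ of elements with $s_1^2=s_2^2=1$ put $E_\beta=\sum_{(s',s'')\in\beta}E_{s',s''}$, and let $B\subset M(G)$ be the span of the $E_\beta$. Let $V:\mathbb C[G]\to M(G)$ be the representation $V(g)(x)=gxg^{-1}$ and $V_\alpha=V(E_\alpha)$. $H=A\oplus B$ (as vector space) carries the multiplication given by the products in $A$ and in $B$ (matrix product) and $E_\alpha E_\beta=V_\alpha E_\beta$, $E_\beta E_\alpha=E_\beta V_\alpha$, extended bilinearly. *)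

theory Defs
  imports "HOL-Algebra.Group" Complex_Main
begin

definition is_subspace ::
  "'v set \<Rightarrow> 'v \<Rightarrow> ('v \<Rightarrow> 'v \<Rightarrow> 'v) \<Rightarrow> (complex \<Rightarrow> 'v \<Rightarrow> 'v) \<Rightarrow> 'v set \<Rightarrow> bool" where
  "is_subspace S z plus_op scl I \<longleftrightarrow> I \<subseteq> S \<and> z \<in> I \<and>
     (\<forall>x\<in>I. \<forall>y\<in>I. plus_op x y \<in> I) \<and> (\<forall>c. \<forall>x\<in>I. scl c x \<in> I)"

definition is_assoc_algebra ::
  "'v set \<Rightarrow> 'v \<Rightarrow> ('v \<Rightarrow> 'v \<Rightarrow> 'v) \<Rightarrow> (complex \<Rightarrow> 'v \<Rightarrow> 'v) \<Rightarrow> ('v \<Rightarrow> 'v \<Rightarrow> 'v) \<Rightarrow> bool" where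
  "is_assoc_algebra S z plus_op scl mul \<longleftrightarrow>
     \<comment> \<open>complex vector space\<close>
     z \<in> S \<and> (\<forall>x\<in>S. \<forall>y\<in>S. plus_op x y \<in> S) \<and> (\<forall>c. \<forall>x\<in>S. scl c x \<in> S) \<and>
     (\<forall>x\<in>S. \<forall>y\<in>S. \<forall>w\<in>S. plus_op (plus_op x y) w = plus_op x (plus_op y w)) \<and>
     (\<forall>x\<in>S. \<forall>y\<in>S. plus_op x y = plus_op y x) \<and>
     (\<forall>x\<in>S. plus_op z x = x) \<and>
     (\<forall>x\<in>S. \<exists>y\<in>S. plus_op x y = z) \<and>
     (\<forall>x\<in>S. scl 1 x = x) \<and>
     (\<forall>c d. \<forall>x\<in>S. scl c (scl d x) = scl (c * d) x) \<and>
     (\<forall>c d. \<forall>x\<in>S. scl (c + d) x = plus_op (scl c x) (scl d x)) \<and>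
     (\<forall>c. \<forall>x\<in>S. \<forall>y\<in>S. scl c (plus_op x y) = plus_op (scl c x) (scl c y)) \<and>
     \<comment> \<open>bilinear, associative multiplication\<close>
     (\<forall>x\<in>S. \<forall>y\<in>S. mul x y \<in> S) \<and>
     (\<forall>x\<in>S. \<forall>y\<in>S. \<forall>w\<in>S. mul (mul x y) w = mul x (mul y w)) \<and>
     (\<forall>x\<in>S. \<forall>y\<in>S. \<forall>w\<in>S. mul (plus_op x y) w = plus_op (mul x w) (mul y w)) \<and>
     (\<forall>x\<in>S. \<forall>y\<in>S. \<forall>w\<in>S. mul x (plus_op y w) = plus_op (mul x y) (mul x w)) \<and>
     (\<forall>c. \<forall>x\<in>S. \<forall>y\<in>S. mul (scl c x) y = scl c (mul x y)) \<and>
     (\<forall>c. \<forall>x\<in>S. \<forall>y\<in>S. mul x (scl c y) = scl c (mul x y))"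

definition is_two_sided_ideal ::
  "'v set \<Rightarrow> 'v \<Rightarrow> ('v \<Rightarrow> 'v \<Rightarrow> 'v) \<Rightarrow> (complex \<Rightarrow> 'v \<Rightarrow> 'v) \<Rightarrow> ('v \<Rightarrow> 'v \<Rightarrow> 'v) \<Rightarrow> 'v set \<Rightarrow> bool" where
  "is_two_sided_ideal S z plus_op scl mul I \<longleftrightarrow> is_subspace S z plus_op scl I \<and>
     (\<forall>x\<in>S. \<forall>y\<in>I. mul x y \<in> I \<and> mul y x \<in> I)"

definition is_nilpotent_set :: "'v \<Rightarrow> ('v \<Rightarrow> 'v \<Rightarrow> 'v) \<Rightarrow> 'v set \<Rightarrow> bool" where
  "is_nilpotent_set z mul I \<longleftrightarrow>
     (\<exists>n::nat. \<forall>x\<in>I. \<forall>xs. set xs \<subseteq> I \<and> length xs = n \<longrightarrow> foldl mul x xs = z)"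

text \<open>Semisimple (Wedderburn): associative algebra without nonzero nilpotent two-sided ideals
 (i.e. with zero radical; H is finite dimensional).\<close>
definition is_semisimple_algebra ::
  "'v set \<Rightarrow> 'v \<Rightarrow> ('v \<Rightarrow> 'v \<Rightarrow> 'v) \<Rightarrow> (complex \<Rightarrow> 'v \<Rightarrow> 'v) \<Rightarrow> ('v \<Rightarrow> 'v \<Rightarrow> 'v) \<Rightarrow> bool" where
  "is_semisimple_algebra S z plus_op scl mul \<longleftrightarrow> is_assoc_algebra S z plus_op scl mul \<and>
     (\<forall>I. is_two_sided_ideal S z plus_op scl mul I \<and> is_nilpotent_set z mul I \<longrightarrow> I = {z})"

definition is_central_subalgebra ::
  "'v set \<Rightarrow> 'v \<Rightarrow> ('v \<Rightarrow> 'v \<Rightarrow> 'v) \<Rightarrow> (complex \<Rightarrow> 'v \<Rightarrow> 'v) \<Rightarrow> ('v \<Rightarrow> 'v \<Rightarrow> 'v) \<Rightarrow> 'v set \<Rightarrow> bool" where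
  "is_central_subalgebra S z plus_op scl mul C \<longleftrightarrow> is_subspace S z plus_op scl C \<and>
     (\<forall>x\<in>C. \<forall>y\<in>C. mul x y \<in> C) \<and>
     (\<forall>x\<in>C. \<forall>y\<in>S. mul x y = mul y x)"

text \<open>Elements of C[G] are coefficient functions g \<mapsto> x_g (supported on carrier G);
 elements of M(G) = End(C[G]) are matrices w.r.t. the basis G, m i j being the coefficient
 of the matrix unit E_{i,j}.\<close>

type_synonym 'g grp_elt = "'g \<Rightarrow> complex"
type_synonym 'g grp_mat = "'g \<Rightarrow> 'g \<Rightarrow> complex"

definition grp_mult :: "('g, 'm) monoid_scheme \<Rightarrow> 'g grp_elt \<Rightarrow> 'g grp_elt \<Rightarrow> 'g grp_elt" where
  "grp_mult G x y = (\<lambda>h. \<Sum>g\<in>carrier G. \<Sum>k\<in>carrier G.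
       if g \<otimes>\<^bsub>G\<^esub> k = h then x g * y k else 0)"

definition mat_mult :: "('g, 'm) monoid_scheme \<Rightarrow> 'g grp_mat \<Rightarrow> 'g grp_mat \<Rightarrow> 'g grp_mat" where
  "mat_mult G m n = (\<lambda>i j. \<Sum>k\<in>carrier G. m i k * n k j)"

definition mat_add :: "'g grp_mat \<Rightarrow> 'g grp_mat \<Rightarrow> 'g grp_mat" where
  "mat_add m n = (\<lambda>i j. m i j + n i j)"

definition conj_classes :: "('g, 'm) monoid_scheme \<Rightarrow> 'g set set" where
  "conj_classes G = {{g \<otimes>\<^bsub>G\<^esub> x \<otimes>\<^bsub>G\<^esub> inv\<^bsub>G\<^esub> g | g. g \<in> carrier G} | x. x \<in> carrier G}"

definition class_sum :: "'g set \<Rightarrow> 'g grp_elt" where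
  "class_sum \<alpha> = (\<lambda>h. if h \<in> \<alpha> then 1 else 0)"

text \<open>The center A of C[G]: the span of the class sums.\<close>
definition A_alg :: "('g, 'm) monoid_scheme \<Rightarrow> 'g grp_elt set" where
  "A_alg G = {(\<lambda>h. \<Sum>\<alpha>\<in>conj_classes G. c \<alpha> * class_sum \<alpha> h) | c. True}"

definition invols :: "('g, 'm) monoid_scheme \<Rightarrow> 'g set" where
  "invols G = {s \<in> carrier G. s \<otimes>\<^bsub>G\<^esub> s = \<one>\<^bsub>G\<^esub>}"

definition pair_classes :: "('g, 'm) monoid_scheme \<Rightarrow> ('g \<times> 'g) set set" where
  "pair_classes G = {{(g \<otimes>\<^bsub>G\<^esub> s1 \<otimes>\<^bsub>G\<^esub> inv\<^bsub>G\<^esub> g, g \<otimes>\<^bsub>G\<^esub> s2 \<otimes>\<^bsub>G\<^esub> inv\<^bsub>G\<^esub> g) | g. g \<in> carrier G}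
       | s1 s2. s1 \<in> invols G \<and> s2 \<in> invols G}"

definition pair_sum :: "('g \<times> 'g) set \<Rightarrow> 'g grp_mat" where
  "pair_sum \<beta> = (\<lambda>i j. if (i, j) \<in> \<beta> then 1 else 0)"

definition B_alg :: "('g, 'm) monoid_scheme \<Rightarrow> 'g grp_mat set" where
  "B_alg G = {(\<lambda>i j. \<Sum>\<beta>\<in>pair_classes G. c \<beta> * pair_sum \<beta> i j) | c. True}"

text \<open>The conjugation representation V(g)(x) = g x g^{-1}, extended linearly to C[G].\<close>
definition V_grp :: "('g, 'm) monoid_scheme \<Rightarrow> 'g \<Rightarrow> 'g grp_mat" where
  "V_grp G g = (\<lambda>i j. if i \<in> carrier G \<and> j \<in> carrier G \<and> i = g \<otimes>\<^bsub>G\<^esub> j \<otimes>\<^bsub>G\<^esub> inv\<^bsub>G\<^esub> g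
                       then 1 else 0)"

definition V_rep :: "('g, 'm) monoid_scheme \<Rightarrow> 'g grp_elt \<Rightarrow> 'g grp_mat" where
  "V_rep G x = (\<lambda>i j. \<Sum>g\<in>carrier G. x g * V_grp G g i j)"

type_synonym 'g H_elt = "'g grp_elt \<times> 'g grp_mat"

definition H_carrier :: "('g, 'm) monoid_scheme \<Rightarrow> 'g H_elt set" where
  "H_carrier G = A_alg G \<times> B_alg G"

definition H_zero :: "'g H_elt" where
  "H_zero = (\<lambda>_. 0, \<lambda>_ _. 0)"

definition H_add :: "'g H_elt \<Rightarrow> 'g H_elt \<Rightarrow> 'g H_elt" where
  "H_add x y = (\<lambda>h. fst x h + fst y h, mat_add (snd x) (snd y))"

definition H_smul :: "complex \<Rightarrow> 'g H_elt \<Rightarrow> 'g H_elt" where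
  "H_smul c x = (\<lambda>h. c * fst x h, \<lambda>i j. c * snd x i j)"

text \<open>(a + b)(a' + b') = a a' + (V(a) b' + b V(a') + b b').\<close>
definition H_mult :: "('g, 'm) monoid_scheme \<Rightarrow> 'g H_elt \<Rightarrow> 'g H_elt \<Rightarrow> 'g H_elt" where
  "H_mult G x y = (grp_mult G (fst x) (fst y),
     mat_add (mat_add (mat_mult G (V_rep G (fst x)) (snd y))
                      (mat_mult G (snd x) (V_rep G (fst y))))
             (mat_mult G (snd x) (snd y)))"

end

theory Submission
  imports Defs
begin



locale fgrp = group G for G :: "('g,'m) monoid_scheme" (structure) + assumes fin: "finite (carrier G)"
begin

definition cj :: "'g \<Rightarrow> 'g \<Rightarrow> 'g" where "cj g x = g \<otimes>\<^bsub>G\<^esub> x \<otimes>\<^bsub>G\<^esub> inv\<^bsub>G\<^esub> g"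

lemma cj_closed[simp]: "g \<in> carrier G \<Longrightarrow> x \<in> carrier G \<Longrightarrow> cj g x \<in> carrier G"
  by (simp add: cj_def)

lemma cj_comp: "g \<in> carrier G \<Longrightarrow> k \<in> carrier G \<Longrightarrow> x \<in> carrier G \<Longrightarrow> cj g (cj k x) = cj (g \<otimes> k) x"
  by (simp add: cj_def inv_mult_group m_assoc)

lemma cj_one[simp]: "x \<in> carrier G \<Longrightarrow> cj \<one> x = x"
  by (simp add: cj_def)

lemma cj_cancel1[simp]: "g \<in> carrier G \<Longrightarrow> x \<in> carrier G \<Longrightarrow> cj (inv g) (cj g x) = x"
  by (simp add: cj_comp)

lemma cj_cancel2[simp]: "g \<in> carrier G \<Longrightarrow> x \<in> carrier G \<Longrightarrow> cj g (cj (inv g) x) = x"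
  by (simp add: cj_comp)

lemma inv_cancel_l[simp]: "g \<in> carrier G \<Longrightarrow> z \<in> carrier G \<Longrightarrow> inv g \<otimes> (g \<otimes> z) = z"
  by (simp add: m_assoc[symmetric])

lemma inv_cancel_l2[simp]: "g \<in> carrier G \<Longrightarrow> z \<in> carrier G \<Longrightarrow> g \<otimes> (inv g \<otimes> z) = z"
  by (simp add: m_assoc[symmetric])

lemma cj_mult: "g \<in> carrier G \<Longrightarrow> x \<in> carrier G \<Longrightarrow> y \<in> carrier G \<Longrightarrow> cj g (x \<otimes> y) = cj g x \<otimes> cj g y"
  by (simp add: cj_def m_assoc)

lemma cj_invx: "g \<in> carrier G \<Longrightarrow> x \<in> carrier G \<Longrightarrow> cj g (inv x) = inv (cj g x)"
  by (simp add: cj_def inv_mult_group m_assoc)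

lemma cj_inj[simp]: "g \<in> carrier G \<Longrightarrow> x \<in> carrier G \<Longrightarrow> y \<in> carrier G \<Longrightarrow> cj g x = cj g y \<longleftrightarrow> x = y"
proof
  assume a: "g \<in> carrier G" "x \<in> carrier G" "y \<in> carrier G" "cj g x = cj g y"
  then have "cj (inv g) (cj g x) = cj (inv g) (cj g y)" by simp
  then show "x = y" using a(1-3) by simp
qed simp

lemma cj_eq_iff: "g \<in> carrier G \<Longrightarrow> x \<in> carrier G \<Longrightarrow> y \<in> carrier G \<Longrightarrow> x = cj g y \<longleftrightarrow> y = cj (inv g) x"
  by (metis cj_cancel1 cj_cancel2 inv_closed)

lemma cj_one'[simp]: "g \<in> carrier G \<Longrightarrow> cj g \<one> = \<one>"
  by (simp add: cj_def)

lemma cj_invols: "g \<in> carrier G \<Longrightarrow> x \<in> carrier G \<Longrightarrow> cj g x \<in> invols G \<longleftrightarrow> x \<in> invols G"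
proof -
  assume a: "g \<in> carrier G" "x \<in> carrier G"
  have "cj g x \<otimes> cj g x = cj g (x \<otimes> x)" using a by (simp add: cj_mult)
  moreover have "cj g (x \<otimes> x) = \<one> \<longleftrightarrow> x \<otimes> x = \<one>"
    using a cj_inj[of g "x \<otimes> x" \<one>] by simp
  ultimately show ?thesis using a unfolding invols_def by auto
qed

lemma bij_cj: "g \<in> carrier G \<Longrightarrow> bij_betw (cj g) (carrier G) (carrier G)"
  by (rule bij_betw_byWitness[where f'="cj (inv g)"]) auto

definition cls :: "'g \<Rightarrow> 'g set" where "cls x = {cj g x | g. g \<in> carrier G}"

lemma conj_classes_eq: "conj_classes G = {cls x | x. x \<in> carrier G}"
  unfolding conj_classes_def cls_def cj_def by simp

lemma cls_sub: "x \<in> carrier G \<Longrightarrow> cls x \<subseteq> carrier G"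
  unfolding cls_def by auto

lemma in_cls: "x \<in> carrier G \<Longrightarrow> x \<in> cls x"
  unfolding cls_def by (force intro: exI[of _ \<one>])

lemma cls_sub_cls: assumes "x \<in> carrier G" "y \<in> cls x" shows "cls y \<subseteq> cls x"
proof
  obtain k where k: "k \<in> carrier G" "y = cj k x" using assms unfolding cls_def by auto
  fix z assume "z \<in> cls y"
  then obtain g where g: "g \<in> carrier G" "z = cj g y" unfolding cls_def by auto
  then have "z = cj (g \<otimes> k) x" using k assms by (simp add: cj_comp)
  then show "z \<in> cls x" unfolding cls_def using g k by blast
qed

lemma cls_sym: assumes "x \<in> carrier G" "y \<in> cls x" shows "x \<in> cls y"
proof -
  obtain k where k: "k \<in> carrier G" "y = cj k x" using assms unfolding cls_def by auto
  then have "x = cj (inv k) y" using assms by simp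
  then show ?thesis unfolding cls_def using k by blast
qed

lemma cls_eq: assumes "x \<in> carrier G" "y \<in> cls x" shows "cls y = cls x"
  using cls_sub_cls[OF assms] cls_sub_cls[of y x] cls_sym[OF assms] cls_sub[OF assms(1)] assms
  by blast

lemma in_class_iff: assumes "\<alpha> \<in> conj_classes G" "h \<in> carrier G"
  shows "h \<in> \<alpha> \<longleftrightarrow> \<alpha> = cls h"
proof -
  obtain x where x: "\<alpha> = cls x" "x \<in> carrier G" using assms(1) unfolding conj_classes_eq by auto
  show ?thesis
  proof
    assume "h \<in> \<alpha>" then show "\<alpha> = cls h" using cls_eq[of x h] x by simp
  next
    assume "\<alpha> = cls h" then show "h \<in> \<alpha>" using in_cls assms(2) by simp
  qed
qed

lemma finite_cc: "finite (conj_classes G)"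
proof -
  have "conj_classes G \<subseteq> Pow (carrier G)" unfolding conj_classes_eq using cls_sub by auto
  then show ?thesis using fin by (meson finite_Pow_iff finite_subset)
qed

definition cfun :: "'g grp_elt \<Rightarrow> bool" where
  "cfun x \<longleftrightarrow> (\<forall>h. h \<notin> carrier G \<longrightarrow> x h = 0) \<and> (\<forall>g\<in>carrier G. \<forall>h\<in>carrier G. x (cj g h) = x h)"

lemma A_alg_eq: "A_alg G = {x. cfun x}"
proof (intro Set.set_eqI iffI)
  fix x assume "x \<in> A_alg G"
  then obtain c where c: "x = (\<lambda>h. \<Sum>\<alpha>\<in>conj_classes G. c \<alpha> * class_sum \<alpha> h)" unfolding A_alg_def by auto
  have z: "x h = 0" if "h \<notin> carrier G" for h
    unfolding c class_sum_def using that conj_classes_eq cls_sub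
    by (intro sum.neutral) auto
  have "x (cj g h) = x h" if "g \<in> carrier G" "h \<in> carrier G" for g h
  proof -
    have "class_sum \<alpha> (cj g h) = class_sum \<alpha> h" if "\<alpha> \<in> conj_classes G" for \<alpha>
    proof -
      have m: "cj g h \<in> cls h" unfolding cls_def using \<open>g \<in> carrier G\<close> by blast
      have "cls (cj g h) = cls h" using cls_eq[OF \<open>h \<in> carrier G\<close> m] .
      then show ?thesis unfolding class_sum_def
        using in_class_iff[OF that] \<open>g \<in> carrier G\<close> \<open>h \<in> carrier G\<close> by simp
    qed
    then show ?thesis unfolding c by simp
  qed
  then show "x \<in> {x. cfun x}" using z unfolding cfun_def by auto
next
  fix x assume "x \<in> {x. cfun x}"
  then have cf: "cfun x" by simp
  define c where "c \<alpha> = x (SOME h. h \<in> \<alpha>)" for \<alpha> :: "'g set"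
  have "x h = (\<Sum>\<alpha>\<in>conj_classes G. c \<alpha> * class_sum \<alpha> h)" for h
  proof (cases "h \<in> carrier G")
    case True
    have "(\<Sum>\<alpha>\<in>conj_classes G. c \<alpha> * class_sum \<alpha> h) = (\<Sum>\<alpha>\<in>conj_classes G. if cls h = \<alpha> then c \<alpha> else 0)"
      unfolding class_sum_def using in_class_iff True by (intro sum.cong) auto
    also have "\<dots> = c (cls h)"
    proof -
      have "cls h \<in> conj_classes G" using True conj_classes_eq by blast
      then show ?thesis using finite_cc by (simp add: sum.delta)
    qed
    also have "\<dots> = x h"
    proof -
      have "(SOME k. k \<in> cls h) \<in> cls h" using in_cls[OF True] by (rule someI)
      then obtain g where "g \<in> carrier G" "(SOME k. k \<in> cls h) = cj g h" unfolding cls_def by auto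
      then show ?thesis using cf True unfolding c_def cfun_def by auto
    qed
    finally show ?thesis by simp
  next
    case False
    have "(\<Sum>\<alpha>\<in>conj_classes G. c \<alpha> * class_sum \<alpha> h) = 0"
    proof (rule sum.neutral, rule ballI)
      fix \<alpha> assume "\<alpha> \<in> conj_classes G"
      then have "\<alpha> \<subseteq> carrier G" using conj_classes_eq cls_sub by auto
      then show "c \<alpha> * class_sum \<alpha> h = 0" using False unfolding class_sum_def by auto
    qed
    then show ?thesis using cf False unfolding cfun_def by simp
  qed
  then show "x \<in> A_alg G" unfolding A_alg_def by auto
qed

end



context fgrp begin

definition pcls :: "'g \<Rightarrow> 'g \<Rightarrow> ('g \<times> 'g) set" where
  "pcls s1 s2 = {(cj g s1, cj g s2) | g. g \<in> carrier G}"

lemma pair_classes_eq: "pair_classes G = {pcls s1 s2 | s1 s2. s1 \<in> invols G \<and> s2 \<in> invols G}"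
  unfolding pair_classes_def pcls_def cj_def by simp

lemma invols_carrier: "s \<in> invols G \<Longrightarrow> s \<in> carrier G"
  unfolding invols_def by auto

lemma pcls_sub: "s1 \<in> invols G \<Longrightarrow> s2 \<in> invols G \<Longrightarrow> pcls s1 s2 \<subseteq> invols G \<times> invols G"
  unfolding pcls_def using cj_invols invols_carrier by auto

lemma in_pcls: "s1 \<in> carrier G \<Longrightarrow> s2 \<in> carrier G \<Longrightarrow> (s1, s2) \<in> pcls s1 s2"
  unfolding pcls_def by (force intro: exI[of _ \<one>])

lemma pcls_sub_pcls: assumes "s1 \<in> carrier G" "s2 \<in> carrier G" "(i, j) \<in> pcls s1 s2"
  shows "pcls i j \<subseteq> pcls s1 s2"
proof
  obtain k where k: "k \<in> carrier G" "i = cj k s1" "j = cj k s2" using assms unfolding pcls_def by auto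
  fix z assume "z \<in> pcls i j"
  then obtain g where g: "g \<in> carrier G" "z = (cj g i, cj g j)" unfolding pcls_def by auto
  then have "z = (cj (g \<otimes> k) s1, cj (g \<otimes> k) s2)" using k assms by (simp add: cj_comp)
  then show "z \<in> pcls s1 s2" unfolding pcls_def using g k by blast
qed

lemma pcls_sym: assumes "s1 \<in> carrier G" "s2 \<in> carrier G" "(i, j) \<in> pcls s1 s2"
  shows "(s1, s2) \<in> pcls i j"
proof -
  obtain k where k: "k \<in> carrier G" "i = cj k s1" "j = cj k s2" using assms unfolding pcls_def by auto
  then have "s1 = cj (inv k) i" "s2 = cj (inv k) j" using assms by simp_all
  then show ?thesis unfolding pcls_def using k by blast
qed

lemma pcls_carrier: "s1 \<in> carrier G \<Longrightarrow> s2 \<in> carrier G \<Longrightarrow> (i, j) \<in> pcls s1 s2 \<Longrightarrow> i \<in> carrier G \<and> j \<in> carrier G"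
  unfolding pcls_def by auto

lemma pcls_eq: assumes "s1 \<in> carrier G" "s2 \<in> carrier G" "(i, j) \<in> pcls s1 s2"
  shows "pcls i j = pcls s1 s2"
  using pcls_sub_pcls[OF assms] pcls_sub_pcls[of i j s1 s2] pcls_sym[OF assms] pcls_carrier[OF assms]
  by blast

lemma in_pclass_iff: assumes "\<beta> \<in> pair_classes G" "i \<in> carrier G" "j \<in> carrier G"
  shows "(i, j) \<in> \<beta> \<longleftrightarrow> \<beta> = pcls i j"
proof -
  obtain s1 s2 where x: "\<beta> = pcls s1 s2" "s1 \<in> invols G" "s2 \<in> invols G"
    using assms(1) unfolding pair_classes_eq by auto
  show ?thesis
  proof
    assume "(i, j) \<in> \<beta>" then show "\<beta> = pcls i j" using pcls_eq[of s1 s2 i j] x invols_carrier by simp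
  next
    assume "\<beta> = pcls i j" then show "(i, j) \<in> \<beta>" using in_pcls assms by simp
  qed
qed

lemma pclass_sub: "\<beta> \<in> pair_classes G \<Longrightarrow> \<beta> \<subseteq> invols G \<times> invols G"
  unfolding pair_classes_eq using pcls_sub by auto

lemma finite_pc: "finite (pair_classes G)"
proof -
  have "pair_classes G \<subseteq> Pow (carrier G \<times> carrier G)" using pclass_sub invols_carrier by blast
  then show ?thesis using fin by (meson finite_Pow_iff finite_subset finite_SigmaI)
qed

definition imat :: "'g grp_mat \<Rightarrow> bool" where
  "imat m \<longleftrightarrow> (\<forall>i j. m i j \<noteq> 0 \<longrightarrow> i \<in> invols G \<and> j \<in> invols G) \<and>
     (\<forall>g\<in>carrier G. \<forall>i\<in>carrier G. \<forall>j\<in>carrier G. m (cj g i) (cj g j) = m i j)"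

lemma B_alg_eq: "B_alg G = {m. imat m}"
proof (intro Set.set_eqI iffI)
  fix m assume "m \<in> B_alg G"
  then obtain c where c: "m = (\<lambda>i j. \<Sum>\<beta>\<in>pair_classes G. c \<beta> * pair_sum \<beta> i j)" unfolding B_alg_def by auto
  have z: "m i j = 0" if "\<not> (i \<in> invols G \<and> j \<in> invols G)" for i j
    unfolding c pair_sum_def using that pclass_sub
    by (intro sum.neutral) auto
  have "m (cj g i) (cj g j) = m i j" if "g \<in> carrier G" "i \<in> carrier G" "j \<in> carrier G" for g i j
  proof -
    have "pair_sum \<beta> (cj g i) (cj g j) = pair_sum \<beta> i j" if "\<beta> \<in> pair_classes G" for \<beta>
    proof -
      have m: "(cj g i, cj g j) \<in> pcls i j" unfolding pcls_def using \<open>g \<in> carrier G\<close> by blast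
      have "pcls (cj g i) (cj g j) = pcls i j" using pcls_eq[OF \<open>i \<in> carrier G\<close> \<open>j \<in> carrier G\<close> m] .
      then show ?thesis unfolding pair_sum_def
        using in_pclass_iff[OF that] \<open>g \<in> carrier G\<close> \<open>i \<in> carrier G\<close> \<open>j \<in> carrier G\<close> by simp
    qed
    then show ?thesis unfolding c by simp
  qed
  moreover have "\<forall>i j. m i j \<noteq> 0 \<longrightarrow> i \<in> invols G \<and> j \<in> invols G" using z by blast
  ultimately show "m \<in> {m. imat m}" unfolding imat_def by auto
next
  fix m assume "m \<in> {m. imat m}"
  then have cf: "imat m" by simp
  define c where "c \<beta> = m (fst (SOME p. p \<in> \<beta>)) (snd (SOME p. p \<in> \<beta>))" for \<beta> :: "('g \<times> 'g) set"
  have "m i j = (\<Sum>\<beta>\<in>pair_classes G. c \<beta> * pair_sum \<beta> i j)" for i j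
  proof (cases "i \<in> invols G \<and> j \<in> invols G")
    case True
    then have ij: "i \<in> carrier G" "j \<in> carrier G" using invols_carrier by auto
    have "(\<Sum>\<beta>\<in>pair_classes G. c \<beta> * pair_sum \<beta> i j) = (\<Sum>\<beta>\<in>pair_classes G. if pcls i j = \<beta> then c \<beta> else 0)"
      unfolding pair_sum_def using in_pclass_iff ij by (intro sum.cong) auto
    also have "\<dots> = c (pcls i j)"
    proof -
      have "pcls i j \<in> pair_classes G" using True pair_classes_eq by blast
      then show ?thesis using finite_pc by (simp add: sum.delta)
    qed
    also have "\<dots> = m i j"
    proof -
      have "(SOME p. p \<in> pcls i j) \<in> pcls i j" using in_pcls[OF ij] by (rule someI)
      then obtain g where "g \<in> carrier G" "(SOME p. p \<in> pcls i j) = (cj g i, cj g j)" unfolding pcls_def by auto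
      then show ?thesis using cf ij unfolding c_def imat_def by auto
    qed
    finally show ?thesis by simp
  next
    case False
    have "(\<Sum>\<beta>\<in>pair_classes G. c \<beta> * pair_sum \<beta> i j) = 0"
    proof (rule sum.neutral, rule ballI)
      fix \<beta> assume "\<beta> \<in> pair_classes G"
      then have "\<beta> \<subseteq> invols G \<times> invols G" using pclass_sub by auto
      then show "c \<beta> * pair_sum \<beta> i j = 0" using False unfolding pair_sum_def by auto
    qed
    then show ?thesis using cf False unfolding imat_def by auto
  qed
  then have "m = (\<lambda>i j. \<Sum>\<beta>\<in>pair_classes G. c \<beta> * pair_sum \<beta> i j)" by (intro ext) simp
  then show "m \<in> B_alg G" unfolding B_alg_def by blast
qed

end



lemma mat_mult_assoc: "mat_mult G (mat_mult G m n) p = mat_mult G m (mat_mult G n p)"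
  unfolding mat_mult_def
  by (intro ext) (simp add: sum_distrib_left sum_distrib_right mult.assoc, rule sum.swap)

lemma mat_mult_add_left: "mat_mult G (mat_add m n) p = mat_add (mat_mult G m p) (mat_mult G n p)"
  unfolding mat_mult_def mat_add_def by (intro ext) (simp add: distrib_right sum.distrib)

lemma mat_mult_add_right: "mat_mult G p (mat_add m n) = mat_add (mat_mult G p m) (mat_mult G p n)"
  unfolding mat_mult_def mat_add_def by (intro ext) (simp add: distrib_left sum.distrib)

lemma mat_mult_zero_left[simp]: "mat_mult G (\<lambda>_ _. 0) m = (\<lambda>_ _. 0)"
  unfolding mat_mult_def by simp

lemma mat_mult_zero_right[simp]: "mat_mult G m (\<lambda>_ _. 0) = (\<lambda>_ _. 0)"
  unfolding mat_mult_def by simp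

lemma mat_add_zero_left[simp]: "mat_add (\<lambda>_ _. 0) m = m"
  unfolding mat_add_def by simp

lemma mat_add_zero_right[simp]: "mat_add m (\<lambda>_ _. 0) = m"
  unfolding mat_add_def by simp

lemma mat_mult_smul_left: "mat_mult G (\<lambda>i j. c * m i j) n = (\<lambda>i j. c * mat_mult G m n i j)"
  unfolding mat_mult_def by (intro ext) (simp add: sum_distrib_left mult.assoc)

lemma mat_mult_smul_right: "mat_mult G m (\<lambda>i j. c * n i j) = (\<lambda>i j. c * mat_mult G m n i j)"
  unfolding mat_mult_def by (intro ext) (simp add: sum_distrib_left mult_ac)

lemma V_rep_add: "V_rep G (\<lambda>h. x h + y h) = mat_add (V_rep G x) (V_rep G y)"
  unfolding V_rep_def mat_add_def by (intro ext) (simp add: distrib_right sum.distrib)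

lemma V_rep_smul: "V_rep G (\<lambda>h. c * x h) = (\<lambda>i j. c * V_rep G x i j)"
  unfolding V_rep_def by (intro ext) (simp add: sum_distrib_left mult.assoc)

lemma V_rep_zero[simp]: "V_rep G (\<lambda>_. 0) = (\<lambda>_ _. 0)"
  unfolding V_rep_def by simp

context fgrp begin

lemma bij_lmult: "a \<in> carrier G \<Longrightarrow> bij_betw (\<lambda>g. a \<otimes> g) (carrier G) (carrier G)"
  by (rule bij_betw_byWitness[where f'="\<lambda>g. inv a \<otimes> g"]) auto

lemma sum_lmult: "a \<in> carrier G \<Longrightarrow> (\<Sum>g\<in>carrier G. f (a \<otimes> g)) = sum f (carrier G)"
  using sum.reindex_bij_betw[OF bij_lmult] .

lemma sum_cj: "a \<in> carrier G \<Longrightarrow> (\<Sum>g\<in>carrier G. f (cj a g)) = sum f (carrier G)"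
  using sum.reindex_bij_betw[OF bij_cj] .

lemma bij_inv: "bij_betw (\<lambda>g. inv g) (carrier G) (carrier G)"
  by (rule bij_betw_byWitness[where f'="\<lambda>g. inv g"]) auto

lemma sum_inv: "(\<Sum>g\<in>carrier G. f (inv g)) = sum f (carrier G)"
  using sum.reindex_bij_betw[OF bij_inv] .

lemma gm_eq: assumes "h \<in> carrier G"
  shows "grp_mult G x y h = (\<Sum>g\<in>carrier G. x g * y (inv g \<otimes> h))"
  unfolding grp_mult_def
proof (rule sum.cong[OF refl])
  fix g assume g: "g \<in> carrier G"
  have "(\<Sum>k\<in>carrier G. if g \<otimes> k = h then x g * y k else 0) =
        (\<Sum>k\<in>carrier G. if inv g \<otimes> h = k then x g * y k else 0)"
    using g assms by (intro sum.cong[OF refl]) (metis inv_solve_left)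
  also have "\<dots> = x g * y (inv g \<otimes> h)" using fin g assms by simp
  finally show "(\<Sum>k\<in>carrier G. if g \<otimes> k = h then x g * y k else 0) = x g * y (inv g \<otimes> h)" .
qed

lemma gm_out: "h \<notin> carrier G \<Longrightarrow> grp_mult G x y h = 0"
  unfolding grp_mult_def by (intro sum.neutral ballI) auto

lemma grp_mult_zero_left[simp]: "grp_mult G (\<lambda>_. 0) x = (\<lambda>_. 0)"
  by (rule ext, rename_tac h, case_tac "h \<in> carrier G") (simp_all add: gm_eq gm_out)

lemma grp_mult_zero_right[simp]: "grp_mult G x (\<lambda>_. 0) = (\<lambda>_. 0)"
  by (rule ext, rename_tac h, case_tac "h \<in> carrier G") (simp_all add: gm_eq gm_out)

lemma grp_mult_add_left: "grp_mult G (\<lambda>h. x h + y h) z = (\<lambda>h. grp_mult G x z h + grp_mult G y z h)"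
  by (rule ext, rename_tac h, case_tac "h \<in> carrier G") (simp_all add: gm_eq gm_out distrib_right sum.distrib)

lemma grp_mult_add_right: "grp_mult G z (\<lambda>h. x h + y h) = (\<lambda>h. grp_mult G z x h + grp_mult G z y h)"
  by (rule ext, rename_tac h, case_tac "h \<in> carrier G") (simp_all add: gm_eq gm_out distrib_left sum.distrib)

lemma grp_mult_smul_left: "grp_mult G (\<lambda>h. c * x h) y = (\<lambda>h. c * grp_mult G x y h)"
  by (rule ext, rename_tac h, case_tac "h \<in> carrier G") (simp_all add: gm_eq gm_out sum_distrib_left mult.assoc)

lemma grp_mult_smul_right: "grp_mult G x (\<lambda>h. c * y h) = (\<lambda>h. c * grp_mult G x y h)"
  by (rule ext, rename_tac h, case_tac "h \<in> carrier G") (simp_all add: gm_eq gm_out sum_distrib_left mult_ac)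

lemma grp_mult_assoc: "grp_mult G (grp_mult G x y) z = grp_mult G x (grp_mult G y z)"
proof (rule ext)
  fix h
  show "grp_mult G (grp_mult G x y) z h = grp_mult G x (grp_mult G y z) h"
  proof (cases "h \<in> carrier G")
    case True
    have "grp_mult G (grp_mult G x y) z h = (\<Sum>g\<in>carrier G. \<Sum>k\<in>carrier G. x k * y (inv k \<otimes> g) * z (inv g \<otimes> h))"
      using True by (simp add: gm_eq sum_distrib_right)
    also have "\<dots> = (\<Sum>k\<in>carrier G. \<Sum>g\<in>carrier G. x k * y (inv k \<otimes> g) * z (inv g \<otimes> h))"
      by (rule sum.swap)
    also have "\<dots> = (\<Sum>k\<in>carrier G. \<Sum>g\<in>carrier G. x k * y (inv k \<otimes> (k \<otimes> g)) * z (inv (k \<otimes> g) \<otimes> h))"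
    proof (rule sum.cong[OF refl])
      fix k assume k: "k \<in> carrier G"
      show "(\<Sum>g\<in>carrier G. x k * y (inv k \<otimes> g) * z (inv g \<otimes> h)) = (\<Sum>g\<in>carrier G. x k * y (inv k \<otimes> (k \<otimes> g)) * z (inv (k \<otimes> g) \<otimes> h))"
        using sum_lmult[OF k, of "\<lambda>g. x k * y (inv k \<otimes> g) * z (inv g \<otimes> h)"] by simp
    qed
    also have "\<dots> = (\<Sum>k\<in>carrier G. \<Sum>g\<in>carrier G. x k * (y g * z (inv g \<otimes> (inv k \<otimes> h))))"
      using True by (intro sum.cong[OF refl]) (simp add: inv_mult_group m_assoc mult.assoc)
    also have "\<dots> = grp_mult G x (grp_mult G y z) h"
      using True by (simp add: gm_eq sum_distrib_left)
    finally show ?thesis .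
  qed (simp add: gm_out)
qed

lemma cfun_zero: "cfun (\<lambda>_. 0)" unfolding cfun_def by simp
lemma cfun_add: "cfun x \<Longrightarrow> cfun y \<Longrightarrow> cfun (\<lambda>h. x h + y h)" unfolding cfun_def by simp
lemma cfun_smul: "cfun x \<Longrightarrow> cfun (\<lambda>h. c * x h)" unfolding cfun_def by simp

lemma cfun_mult: assumes "cfun x" "cfun y" shows "cfun (grp_mult G x y)"
proof -
  have "grp_mult G x y (cj a h) = grp_mult G x y h" if a: "a \<in> carrier G" "h \<in> carrier G" for a h
  proof -
    have "grp_mult G x y (cj a h) = (\<Sum>g\<in>carrier G. x (cj a g) * y (inv (cj a g) \<otimes> cj a h))"
      using a sum_cj[OF a(1), of "\<lambda>g. x g * y (inv g \<otimes> cj a h)"] by (simp add: gm_eq)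
    also have "\<dots> = (\<Sum>g\<in>carrier G. x g * y (inv g \<otimes> h))"
      using a assms unfolding cfun_def by (intro sum.cong[OF refl]) (simp add: cj_invx[symmetric] cj_mult[symmetric])
    finally show ?thesis using a by (simp add: gm_eq)
  qed
  then show ?thesis unfolding cfun_def by (simp add: gm_out)
qed

lemma cfun_comm: assumes "cfun x" shows "grp_mult G x y = grp_mult G y x"
proof (rule ext)
  fix h show "grp_mult G x y h = grp_mult G y x h"
  proof (cases "h \<in> carrier G")
    case True
    have "grp_mult G x y h = (\<Sum>g\<in>carrier G. x (h \<otimes> g) * y (inv (h \<otimes> g) \<otimes> h))"
      using True sum_lmult[OF True, of "\<lambda>g. x g * y (inv g \<otimes> h)"] by (simp add: gm_eq)
    also have "\<dots> = (\<Sum>g\<in>carrier G. y (inv g) * x (g \<otimes> h))"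
    proof (intro sum.cong[OF refl])
      fix g assume g: "g \<in> carrier G"
      have "cj h (g \<otimes> h) = h \<otimes> g" using g True by (simp add: cj_def m_assoc)
      then have "x (h \<otimes> g) = x (g \<otimes> h)" using assms g True unfolding cfun_def by (metis m_closed)
      moreover have "inv (h \<otimes> g) \<otimes> h = inv g" using g True by (simp add: inv_mult_group m_assoc)
      ultimately show "x (h \<otimes> g) * y (inv (h \<otimes> g) \<otimes> h) = y (inv g) * x (g \<otimes> h)" by simp
    qed
    also have "\<dots> = (\<Sum>g\<in>carrier G. y (inv g) * x (inv (inv g) \<otimes> h))"
      by (intro sum.cong[OF refl]) simp
    also have "\<dots> = grp_mult G y x h"
      using True sum_inv[of "\<lambda>g. y g * x (inv g \<otimes> h)"] by (simp add: gm_eq)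
    finally show ?thesis .
  qed (simp add: gm_out)
qed

end



context fgrp begin

lemma sum_pick: assumes "a \<in> carrier G" "\<And>k. k \<in> carrier G \<Longrightarrow> P k \<longleftrightarrow> k = a"
  shows "(\<Sum>k\<in>carrier G. if P k then f k else 0) = f a"
proof -
  have "(\<Sum>k\<in>carrier G. if P k then f k else 0) = (\<Sum>k\<in>carrier G. if a = k then f k else 0)"
    using assms(2) by (intro sum.cong[OF refl]) auto
  also have "\<dots> = f a" using fin assms(1) by simp
  finally show ?thesis .
qed

lemma V_eq: "V_rep G x i j = (\<Sum>g\<in>carrier G. if i \<in> carrier G \<and> j \<in> carrier G \<and> i = cj g j then x g else 0)"
  unfolding V_rep_def V_grp_def cj_def by (intro sum.cong[OF refl]) auto

lemma Vb_eq: "mat_mult G (V_rep G x) b i j =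
   (if i \<in> carrier G then \<Sum>g\<in>carrier G. x g * b (cj (inv g) i) j else 0)"
proof -
  have "mat_mult G (V_rep G x) b i j =
     (\<Sum>k\<in>carrier G. \<Sum>g\<in>carrier G. if i \<in> carrier G \<and> k \<in> carrier G \<and> i = cj g k then x g * b k j else 0)"
    unfolding mat_mult_def V_eq sum_distrib_right by (intro sum.cong[OF refl]) auto
  also have "\<dots> = (\<Sum>g\<in>carrier G. \<Sum>k\<in>carrier G. if i \<in> carrier G \<and> k \<in> carrier G \<and> i = cj g k then x g * b k j else 0)"
    by (rule sum.swap)
  also have "\<dots> = (if i \<in> carrier G then \<Sum>g\<in>carrier G. x g * b (cj (inv g) i) j else 0)"
  proof (cases "i \<in> carrier G")
    case True
    have "(\<Sum>k\<in>carrier G. if i \<in> carrier G \<and> k \<in> carrier G \<and> i = cj g k then x g * b k j else 0) = x g * b (cj (inv g) i) j"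
      if g: "g \<in> carrier G" for g
    proof (rule sum_pick)
      show "cj (inv g) i \<in> carrier G" using True g by simp
      fix k assume k: "k \<in> carrier G"
      show "(i \<in> carrier G \<and> k \<in> carrier G \<and> i = cj g k) = (k = cj (inv g) i)"
        using cj_eq_iff[OF g True k] True k by blast
    qed
    then show ?thesis using True by simp
  qed simp
  finally show ?thesis .
qed

lemma bV_eq: "mat_mult G b (V_rep G x) i j =
   (if j \<in> carrier G then \<Sum>g\<in>carrier G. x g * b i (cj g j) else 0)"
proof -
  have "mat_mult G b (V_rep G x) i j =
     (\<Sum>k\<in>carrier G. \<Sum>g\<in>carrier G. if k \<in> carrier G \<and> j \<in> carrier G \<and> k = cj g j then x g * b i k else 0)"
    unfolding mat_mult_def V_eq sum_distrib_left by (intro sum.cong[OF refl]) auto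
  also have "\<dots> = (\<Sum>g\<in>carrier G. \<Sum>k\<in>carrier G. if k \<in> carrier G \<and> j \<in> carrier G \<and> k = cj g j then x g * b i k else 0)"
    by (rule sum.swap)
  also have "\<dots> = (if j \<in> carrier G then \<Sum>g\<in>carrier G. x g * b i (cj g j) else 0)"
  proof (cases "j \<in> carrier G")
    case True
    have "(\<Sum>k\<in>carrier G. if k \<in> carrier G \<and> j \<in> carrier G \<and> k = cj g j then x g * b i k else 0) = x g * b i (cj g j)"
      if g: "g \<in> carrier G" for g
      using True g by (intro sum_pick) auto
    then show ?thesis using True by simp
  qed simp
  finally show ?thesis .
qed

lemma V_hom: "V_rep G (grp_mult G x y) = mat_mult G (V_rep G x) (V_rep G y)"
proof (intro ext)
  fix i j
  show "V_rep G (grp_mult G x y) i j = mat_mult G (V_rep G x) (V_rep G y) i j"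
  proof (cases "i \<in> carrier G \<and> j \<in> carrier G")
    case True
    then have i: "i \<in> carrier G" and j: "j \<in> carrier G" by auto
    have "V_rep G (grp_mult G x y) i j = (\<Sum>h\<in>carrier G. if i = cj h j then \<Sum>g\<in>carrier G. x g * y (inv g \<otimes> h) else 0)"
      unfolding V_eq using True by (intro sum.cong[OF refl]) (auto simp: gm_eq)
    also have "\<dots> = (\<Sum>h\<in>carrier G. \<Sum>g\<in>carrier G. x g * (if i = cj h j then y (inv g \<otimes> h) else 0))"
      by (intro sum.cong[OF refl]) (auto simp: sum_distrib_left)
    also have "\<dots> = (\<Sum>g\<in>carrier G. x g * (\<Sum>h\<in>carrier G. if i = cj h j then y (inv g \<otimes> h) else 0))"
      by (subst sum.swap) (simp add: sum_distrib_left)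
    also have "\<dots> = (\<Sum>g\<in>carrier G. x g * (\<Sum>h\<in>carrier G. if i = cj (g \<otimes> h) j then y h else 0))"
    proof (rule sum.cong[OF refl])
      fix g assume g: "g \<in> carrier G"
      have "(\<Sum>h\<in>carrier G. if i = cj h j then y (inv g \<otimes> h) else 0) =
            (\<Sum>h\<in>carrier G. if i = cj (g \<otimes> h) j then y (inv g \<otimes> (g \<otimes> h)) else 0)"
        using sum_lmult[OF g, of "\<lambda>h. if i = cj h j then y (inv g \<otimes> h) else 0"] by simp
      also have "\<dots> = (\<Sum>h\<in>carrier G. if i = cj (g \<otimes> h) j then y h else 0)"
        using g by (intro sum.cong[OF refl]) simp
      finally show "x g * (\<Sum>h\<in>carrier G. if i = cj h j then y (inv g \<otimes> h) else 0) =
         x g * (\<Sum>h\<in>carrier G. if i = cj (g \<otimes> h) j then y h else 0)"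
        by simp
    qed
    also have "\<dots> = (\<Sum>g\<in>carrier G. x g * V_rep G y (cj (inv g) i) j)"
    proof (rule sum.cong[OF refl])
      fix g assume g: "g \<in> carrier G"
      have "V_rep G y (cj (inv g) i) j = (\<Sum>h\<in>carrier G. if i = cj (g \<otimes> h) j then y h else 0)"
        unfolding V_eq using g i j
      proof (intro sum.cong[OF refl])
        fix h assume h: "h \<in> carrier G"
        have "(cj (inv g) i = cj h j) \<longleftrightarrow> (i = cj (g \<otimes> h) j)"
          using cj_eq_iff[OF g i, of "cj h j"] h g i j cj_comp[of g h j] by auto
        then show "(if cj (inv g) i \<in> carrier G \<and> j \<in> carrier G \<and> cj (inv g) i = cj h j then y h else 0) =
           (if i = cj (g \<otimes> h) j then y h else 0)" using g i j by simp
      qed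
      then show "x g * (\<Sum>h\<in>carrier G. if i = cj (g \<otimes> h) j then y h else 0) =
          x g * V_rep G y (cj (inv g) i) j" by simp
    qed
    also have "\<dots> = mat_mult G (V_rep G x) (V_rep G y) i j"
      using i by (simp add: Vb_eq)
    finally show ?thesis .
  next
    case False
    then show ?thesis
    proof (cases "i \<in> carrier G")
      case True
      then have "j \<notin> carrier G" using False by simp
      then show ?thesis unfolding Vb_eq V_eq by simp
    qed (simp add: Vb_eq V_eq)
  qed
qed

end



context fgrp begin

lemma imat_zero: "imat (\<lambda>_ _. 0)" unfolding imat_def by simp
lemma imat_add: "imat m \<Longrightarrow> imat n \<Longrightarrow> imat (mat_add m n)"
  unfolding imat_def mat_add_def by (metis add.right_neutral)
lemma imat_smul: "imat m \<Longrightarrow> imat (\<lambda>i j. c * m i j)"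
  unfolding imat_def by auto

lemma imat_inv: "imat m \<Longrightarrow> m i j \<noteq> 0 \<Longrightarrow> i \<in> invols G \<and> j \<in> invols G"
  unfolding imat_def by blast

lemma imat_cj: "imat m \<Longrightarrow> g \<in> carrier G \<Longrightarrow> i \<in> carrier G \<Longrightarrow> j \<in> carrier G \<Longrightarrow> m (cj g i) (cj g j) = m i j"
  unfolding imat_def by blast

lemma sum_nz: "(\<Sum>k\<in>A. f k) \<noteq> 0 \<Longrightarrow> \<exists>k\<in>A. f k \<noteq> (0::complex)"
  using sum.neutral by metis

lemma imat_mult: assumes "imat m" "imat n" shows "imat (mat_mult G m n)"
proof -
  have s: "i \<in> invols G \<and> j \<in> invols G" if "mat_mult G m n i j \<noteq> 0" for i j
  proof -
    have "(\<Sum>k\<in>carrier G. m i k * n k j) \<noteq> 0" using that unfolding mat_mult_def .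
    then obtain k where "m i k * n k j \<noteq> 0" using sum_nz by blast
    then show ?thesis using imat_inv[OF assms(1), of i k] imat_inv[OF assms(2), of k j] by auto
  qed
  have "mat_mult G m n (cj g i) (cj g j) = mat_mult G m n i j"
    if g: "g \<in> carrier G" "i \<in> carrier G" "j \<in> carrier G" for g i j
  proof -
    have "mat_mult G m n (cj g i) (cj g j) = (\<Sum>k\<in>carrier G. m (cj g i) (cj g k) * n (cj g k) (cj g j))"
      unfolding mat_mult_def using sum_cj[OF g(1), of "\<lambda>k. m (cj g i) k * n k (cj g j)"] by simp
    also have "\<dots> = mat_mult G m n i j" unfolding mat_mult_def
      using g imat_cj[OF assms(1)] imat_cj[OF assms(2)] by (intro sum.cong[OF refl]) auto
    finally show ?thesis .
  qed
  then show ?thesis using s unfolding imat_def by blast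
qed

lemma V_comm: assumes "imat b" shows "mat_mult G (V_rep G x) b = mat_mult G b (V_rep G x)"
proof (intro ext)
  fix i j
  show "mat_mult G (V_rep G x) b i j = mat_mult G b (V_rep G x) i j"
  proof (cases "i \<in> carrier G")
    case i: True
    show ?thesis
    proof (cases "j \<in> carrier G")
      case j: True
      have "b (cj (inv g) i) j = b i (cj g j)" if g: "g \<in> carrier G" for g
        using imat_cj[OF assms g, of "cj (inv g) i" j] g i j by simp
      then show ?thesis using i j by (simp add: Vb_eq bV_eq)
    next
      case False
      then have "j \<notin> invols G" using invols_carrier by blast
      then have "b k j = 0" for k using imat_inv[OF assms, of k j] by blast
      then show ?thesis using False by (simp add: Vb_eq bV_eq)
    qed
  next
    case False
    then have "i \<notin> invols G" using invols_carrier by blast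
    then have "b i k = 0" for k using imat_inv[OF assms, of i k] by blast
    then show ?thesis using False by (simp add: Vb_eq bV_eq)
  qed
qed

lemma cj_cj: "c \<in> carrier G \<Longrightarrow> u \<in> carrier G \<Longrightarrow> i \<in> carrier G \<Longrightarrow> cj (cj c u) (cj c i) = cj c (cj u i)"
proof -
  assume a: "c \<in> carrier G" "u \<in> carrier G" "i \<in> carrier G"
  have "cj c u \<otimes> c = c \<otimes> u" using a by (simp add: cj_def m_assoc)
  then show ?thesis using a by (simp add: cj_comp)
qed

lemma imat_Vb: assumes "cfun a" "imat b" shows "imat (mat_mult G (V_rep G a) b)"
proof -
  have s: "i \<in> invols G \<and> j \<in> invols G" if nz: "mat_mult G (V_rep G a) b i j \<noteq> 0" for i j
  proof -
    have i: "i \<in> carrier G" using nz by (simp add: Vb_eq split: if_splits)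
    have "(\<Sum>g\<in>carrier G. a g * b (cj (inv g) i) j) \<noteq> 0" using nz i by (simp add: Vb_eq)
    then obtain g where g: "g \<in> carrier G" "a g * b (cj (inv g) i) j \<noteq> 0"
      using sum_nz by blast
    then have "cj (inv g) i \<in> invols G \<and> j \<in> invols G" using imat_inv[OF assms(2)] by auto
    then show ?thesis using cj_invols[of "inv g" i] g i by simp
  qed
  have "mat_mult G (V_rep G a) b (cj c i) (cj c j) = mat_mult G (V_rep G a) b i j"
    if c: "c \<in> carrier G" "i \<in> carrier G" "j \<in> carrier G" for c i j
  proof -
    have "mat_mult G (V_rep G a) b (cj c i) (cj c j) = (\<Sum>g\<in>carrier G. a (cj c g) * b (cj (inv (cj c g)) (cj c i)) (cj c j))"
      using c sum_cj[OF c(1), of "\<lambda>g. a g * b (cj (inv g) (cj c i)) (cj c j)"] by (simp add: Vb_eq)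
    also have "\<dots> = (\<Sum>g\<in>carrier G. a g * b (cj (inv g) i) j)"
    proof (rule sum.cong[OF refl])
      fix g assume g: "g \<in> carrier G"
      have "cj (inv (cj c g)) (cj c i) = cj c (cj (inv g) i)"
        using c g by (simp add: cj_invx[symmetric] cj_cj)
      then show "a (cj c g) * b (cj (inv (cj c g)) (cj c i)) (cj c j) = a g * b (cj (inv g) i) j"
        using assms c g imat_cj[OF assms(2) c(1), of "cj (inv g) i" j] unfolding cfun_def by simp
    qed
    also have "\<dots> = mat_mult G (V_rep G a) b i j" using c by (simp add: Vb_eq)
    finally show ?thesis .
  qed
  then show ?thesis using s unfolding imat_def by blast
qed

lemma imat_bV: "cfun a \<Longrightarrow> imat b \<Longrightarrow> imat (mat_mult G b (V_rep G a))"
  using imat_Vb V_comm by metis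

end



lemma sos_zero: assumes "finite A" "(\<Sum>g\<in>A. cnj (f g) * f g) = 0" "g \<in> A" shows "f g = (0::complex)"
proof -
  have e: "cnj z * z = complex_of_real ((cmod z)\<^sup>2)" for z
    using complex_norm_square[of z] by (simp add: mult.commute)
  have "(\<Sum>g\<in>A. cnj (f g) * f g) = complex_of_real (\<Sum>g\<in>A. (cmod (f g))\<^sup>2)"
    unfolding e of_real_sum by (rule refl)
  then have "complex_of_real (\<Sum>g\<in>A. (cmod (f g))\<^sup>2) = 0" using assms(2) by metis
  then have "(\<Sum>g\<in>A. (cmod (f g))\<^sup>2) = 0" by (simp only: of_real_eq_0_iff)
  moreover have "\<And>x. x \<in> A \<Longrightarrow> 0 \<le> (cmod (f x))\<^sup>2" by simp
  ultimately have "(cmod (f g))\<^sup>2 = 0" using sum_nonneg_eq_0_iff[OF assms(1), of "\<lambda>x. (cmod (f x))\<^sup>2"] assms(3) by blast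
  then show ?thesis by simp
qed

definition bstar :: "'g grp_mat \<Rightarrow> 'g grp_mat" where "bstar m = (\<lambda>i j. cnj (m j i))"

lemma bstar_bstar[simp]: "bstar (bstar m) = m" unfolding bstar_def by simp

lemma bstar_mult: "bstar (mat_mult G m n) = mat_mult G (bstar n) (bstar m)"
  unfolding bstar_def mat_mult_def by (intro ext) (simp add: mult.commute)

lemma bstar_add: "bstar (mat_add m n) = mat_add (bstar m) (bstar n)"
  unfolding bstar_def mat_add_def by simp

lemma bstar_zero[simp]: "bstar (\<lambda>_ _. 0) = (\<lambda>_ _. 0)"
  unfolding bstar_def by simp

context fgrp begin

definition astar :: "'g grp_elt \<Rightarrow> 'g grp_elt" where
  "astar x = (\<lambda>g. if g \<in> carrier G then cnj (x (inv g)) else 0)"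

lemma cfun_astar: assumes "cfun x" shows "cfun (astar x)"
  unfolding cfun_def
proof (intro conjI allI impI ballI)
  fix h assume "h \<notin> carrier G" then show "astar x h = 0" unfolding astar_def by simp
next
  fix g h assume g: "g \<in> carrier G" and h: "h \<in> carrier G"
  then have "x (inv (cj g h)) = x (inv h)" using assms unfolding cfun_def by (simp add: cj_invx[symmetric])
  then show "astar x (cj g h) = astar x h" using g h unfolding astar_def by simp
qed

lemma astar_astar: "cfun x \<Longrightarrow> astar (astar x) = x"
  unfolding astar_def cfun_def by (intro ext) auto

lemma imat_bstar: "imat m \<Longrightarrow> imat (bstar m)"
  unfolding imat_def bstar_def by (metis complex_cnj_zero)

lemma astar_mult: "astar (grp_mult G x y) = grp_mult G (astar y) (astar x)"
proof (intro ext)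
  fix h show "astar (grp_mult G x y) h = grp_mult G (astar y) (astar x) h"
  proof (cases "h \<in> carrier G")
    case True
    have "astar (grp_mult G x y) h = cnj (\<Sum>g\<in>carrier G. x g * y (inv g \<otimes> inv h))"
      using True by (simp add: astar_def gm_eq)
    also have "\<dots> = cnj (\<Sum>g\<in>carrier G. x (inv h \<otimes> g) * y (inv (inv h \<otimes> g) \<otimes> inv h))"
      using sum_lmult[of "inv h" "\<lambda>g. x g * y (inv g \<otimes> inv h)"] True by simp
    also have "\<dots> = (\<Sum>g\<in>carrier G. cnj (y (inv g)) * cnj (x (inv h \<otimes> g)))"
      using True by (simp add: inv_mult_group m_assoc mult.commute)
    also have "\<dots> = grp_mult G (astar y) (astar x) h"
      unfolding gm_eq[OF True] using True by (intro sum.cong[OF refl]) (simp_all add: astar_def inv_mult_group)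
    finally show ?thesis .
  qed (simp add: astar_def gm_out)
qed

lemma bstar_V: "bstar (V_rep G x) = V_rep G (astar x)"
proof (intro ext)
  fix i j
  have "V_rep G (astar x) i j = (\<Sum>g\<in>carrier G. if i \<in> carrier G \<and> j \<in> carrier G \<and> i = cj (inv g) j then astar x (inv g) else 0)"
    unfolding V_eq using sum_inv[of "\<lambda>g. if i \<in> carrier G \<and> j \<in> carrier G \<and> i = cj g j then astar x g else 0"] by simp
  also have "\<dots> = (\<Sum>g\<in>carrier G. if j \<in> carrier G \<and> i \<in> carrier G \<and> j = cj g i then cnj (x g) else 0)"
  proof (rule sum.cong[OF refl])
    fix g assume g: "g \<in> carrier G"
    show "(if i \<in> carrier G \<and> j \<in> carrier G \<and> i = cj (inv g) j then astar x (inv g) else 0) =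
          (if j \<in> carrier G \<and> i \<in> carrier G \<and> j = cj g i then cnj (x g) else 0)"
    proof (cases "i \<in> carrier G \<and> j \<in> carrier G")
      case True
      then have "(i = cj (inv g) j) = (j = cj g i)" using cj_eq_iff[OF g, of j i] by auto
      then show ?thesis using True g by (simp add: astar_def)
    qed auto
  qed
  also have "\<dots> = bstar (V_rep G x) i j"
    unfolding bstar_def V_eq by (simp add: if_distrib cong: if_cong)
  finally show "bstar (V_rep G x) i j = V_rep G (astar x) i j" by simp
qed

lemma pos_A: assumes "cfun x" "grp_mult G (astar x) x = (\<lambda>_. 0)" shows "x = (\<lambda>_. 0)"
proof -
  have "grp_mult G (astar x) x \<one> = (\<Sum>g\<in>carrier G. cnj (x (inv g)) * x (inv g))"
    by (simp add: gm_eq astar_def)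
  also have "\<dots> = (\<Sum>g\<in>carrier G. cnj (x g) * x g)"
    using sum_inv[of "\<lambda>g. cnj (x g) * x g"] .
  finally have "(\<Sum>g\<in>carrier G. cnj (x g) * x g) = 0" using assms(2) by simp
  then have "x g = 0" if "g \<in> carrier G" for g using sos_zero[OF fin] that by blast
  then show ?thesis using assms(1) unfolding cfun_def by (intro ext) metis
qed

lemma pos_B: assumes "imat m" "mat_mult G (bstar m) m = (\<lambda>_ _. 0)" shows "m = (\<lambda>_ _. 0)"
proof (intro ext)
  fix k j
  show "m k j = 0"
  proof (cases "k \<in> carrier G \<and> j \<in> carrier G")
    case True
    have "(\<Sum>k\<in>carrier G. cnj (m k j) * m k j) = 0"
      using fun_cong[OF fun_cong[OF assms(2), of j], of j] unfolding mat_mult_def bstar_def .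
    then show ?thesis using sos_zero[OF fin, of "\<lambda>k. m k j"] True by blast
  next
    case False
    then show ?thesis using imat_inv[OF assms(1), of k j] invols_carrier by blast
  qed
qed

end



lemma foldl_rep_shift: "foldl mul (mul a h) (replicate n h) = mul (foldl mul a (replicate n h)) h"
  by (induction n arbitrary: a) auto

lemma herm_nil:
  assumes cl: "\<forall>x\<in>S. \<forall>y\<in>S. mul x y \<in> S"
    and as: "\<forall>x\<in>S. \<forall>y\<in>S. \<forall>w\<in>S. mul (mul x y) w = mul x (mul y w)"
    and sc: "\<forall>x\<in>S. star x \<in> S"
    and sm: "\<forall>x\<in>S. \<forall>y\<in>S. star (mul x y) = mul (star y) (star x)"
    and zr: "\<forall>x\<in>S. mul x z = z"
    and pos: "\<forall>x\<in>S. mul (star x) x = z \<longrightarrow> x = z"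
    and h: "h \<in> S" "star h = h"
  shows "foldl mul h (replicate n h) = z \<Longrightarrow> h = z"
proof -
  define pw where "pw n = foldl mul h (replicate n h)" for n
  have pw0: "pw 0 = h" unfolding pw_def by simp
  have pwS: "pw (Suc n) = mul (pw n) h" for n
    unfolding pw_def using foldl_rep_shift[of mul h h n] by simp
  have pwin: "pw n \<in> S" for n
    by (induction n) (use h cl in \<open>simp_all add: pw0 pwS\<close>)
  have pwadd: "mul (pw m) (pw n) = pw (m + n + 1)" for m n
  proof (induction n)
    case 0 then show ?case by (simp add: pw0 pwS)
  next
    case (Suc n)
    have "mul (pw m) (pw (Suc n)) = mul (mul (pw m) (pw n)) h"
      using as pwin h by (simp add: pwS)
    also have "\<dots> = pw (m + Suc n + 1)" using Suc by (simp add: pwS)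
    finally show ?case .
  qed
  have pwstar: "star (pw n) = pw n" for n
  proof (induction n)
    case 0 then show ?case using h by (simp add: pw0)
  next
    case (Suc n)
    have "star (pw (Suc n)) = mul h (pw n)" using sm pwin h Suc by (simp add: pwS)
    also have "\<dots> = pw (Suc n)" using pwadd[of 0 n] by (simp add: pw0)
    finally show ?case .
  qed
  have main: "pw n = z \<Longrightarrow> h = z" for n
  proof (induction n rule: less_induct)
    case (less n)
    show ?case
    proof (cases n)
      case 0 then show ?thesis using less.prems by (simp add: pw0)
    next
      case (Suc n')
      define p where "p = n div 2"
      have pn: "p < n" using Suc unfolding p_def by simp
      have sq: "mul (star (pw p)) (pw p) = pw (2 * p + 1)"
        using pwstar pwadd[of p p] by (simp add: mult_2)
      have "pw (2 * p + 1) = z"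
      proof (cases "2 * p + 1 = n")
        case True then show ?thesis using less.prems by simp
      next
        case False
        then have "2 * p + 1 = (2 * p - n) + n + 1" unfolding p_def by auto
        then have "pw (2 * p + 1) = mul (pw (2 * p - n)) (pw n)" using pwadd by simp
        then show ?thesis using less.prems zr pwin by simp
      qed
      then have "pw p = z" using pos pwin sq by simp
      then show ?thesis using less.IH pn by blast
    qed
  qed
  show "foldl mul h (replicate n h) = z \<Longrightarrow> h = z" using main unfolding pw_def by blast
qed

lemma semisimple_from_star:
  assumes alg: "is_assoc_algebra S z pl scl mul"
    and sc: "\<forall>x\<in>S. star x \<in> S"
    and sm: "\<forall>x\<in>S. \<forall>y\<in>S. star (mul x y) = mul (star y) (star x)"
    and ss: "\<forall>x\<in>S. star (star x) = x"
    and zr: "\<forall>x\<in>S. mul x z = z"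
    and pos: "\<forall>x\<in>S. mul (star x) x = z \<longrightarrow> x = z"
  shows "is_semisimple_algebra S z pl scl mul"
  unfolding is_semisimple_algebra_def
proof (intro conjI allI impI)
  show "is_assoc_algebra S z pl scl mul" by fact
  have cl: "\<forall>x\<in>S. \<forall>y\<in>S. mul x y \<in> S" and as: "\<forall>x\<in>S. \<forall>y\<in>S. \<forall>w\<in>S. mul (mul x y) w = mul x (mul y w)"
    using alg unfolding is_assoc_algebra_def by auto
  fix I assume a: "is_two_sided_ideal S z pl scl mul I \<and> is_nilpotent_set z mul I"
  then have IS: "I \<subseteq> S" and zI: "z \<in> I" and id: "\<forall>x\<in>S. \<forall>y\<in>I. mul x y \<in> I \<and> mul y x \<in> I"
    unfolding is_two_sided_ideal_def is_subspace_def by auto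
  obtain n where n: "\<forall>x\<in>I. \<forall>xs. set xs \<subseteq> I \<and> length xs = n \<longrightarrow> foldl mul x xs = z"
    using a unfolding is_nilpotent_set_def by auto
  have "x = z" if x: "x \<in> I" for x
  proof -
    have xS: "x \<in> S" using x IS by auto
    define h where "h = mul (star x) x"
    have hI: "h \<in> I" unfolding h_def using id sc xS x by auto
    have hS: "h \<in> S" using hI IS by auto
    have hs: "star h = h" unfolding h_def using sm sc ss xS by simp
    have "set (replicate n h) \<subseteq> I \<and> length (replicate n h) = n" using hI by (auto simp: set_replicate_conv_if)
    then have "foldl mul h (replicate n h) = z" using n hI by blast
    then have "h = z" using herm_nil[OF cl as sc sm zr pos hS hs] by blast
    then show "x = z" using pos xS unfolding h_def by blast
  qed
  then show "I = {z}" using zI by blast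
qed




context fgrp begin

lemma HC_mem: "x \<in> H_carrier G \<longleftrightarrow> cfun (fst x) \<and> imat (snd x)"
  unfolding H_carrier_def A_alg_eq B_alg_eq by (cases x) auto

lemma H_assoc: "is_assoc_algebra (H_carrier G) H_zero H_add H_smul (H_mult G)"
  unfolding is_assoc_algebra_def
proof (intro conjI allI ballI)
  show "H_zero \<in> H_carrier G" unfolding HC_mem H_zero_def using cfun_zero imat_zero by simp
next
  fix x y assume "x \<in> H_carrier G" "y \<in> H_carrier G"
  then show "H_add x y \<in> H_carrier G" unfolding HC_mem H_add_def using cfun_add imat_add by simp
next
  fix c x assume "x \<in> H_carrier G"
  then show "H_smul c x \<in> H_carrier G" unfolding HC_mem H_smul_def using cfun_smul imat_smul by simp
next
  fix x y w :: "'g H_elt"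
  show "H_add (H_add x y) w = H_add x (H_add y w)"
    unfolding H_add_def mat_add_def by (simp add: add.assoc)
next
  fix x y :: "'g H_elt"
  show "H_add x y = H_add y x"
    unfolding H_add_def mat_add_def by (simp add: add.commute)
next
  fix x :: "'g H_elt"
  show "H_add H_zero x = x"
    unfolding H_add_def H_zero_def by simp
next
  fix x assume x: "x \<in> H_carrier G"
  show "\<exists>y\<in>H_carrier G. H_add x y = H_zero"
  proof
    show "H_smul (-1) x \<in> H_carrier G" using x unfolding HC_mem H_smul_def
      using cfun_smul[of "fst x" "-1"] imat_smul[of "snd x" "-1"] by simp
    show "H_add x (H_smul (-1) x) = H_zero" unfolding H_add_def H_smul_def H_zero_def mat_add_def by simp
  qed
next
  fix x :: "'g H_elt"
  show "H_smul 1 x = x" unfolding H_smul_def by simp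
next
  fix c d and x :: "'g H_elt"
  show "H_smul c (H_smul d x) = H_smul (c * d) x" unfolding H_smul_def by (simp add: mult.assoc)
next
  fix c d and x :: "'g H_elt"
  show "H_smul (c + d) x = H_add (H_smul c x) (H_smul d x)" unfolding H_smul_def H_add_def mat_add_def
    by (simp add: distrib_right)
next
  fix c and x y :: "'g H_elt"
  show "H_smul c (H_add x y) = H_add (H_smul c x) (H_smul c y)" unfolding H_smul_def H_add_def mat_add_def
    by (simp add: distrib_left)
next
  fix x y assume "x \<in> H_carrier G" "y \<in> H_carrier G"
  then show "H_mult G x y \<in> H_carrier G" unfolding HC_mem H_mult_def
    using cfun_mult imat_add imat_Vb imat_bV imat_mult by simp
next
  fix x y w :: "'g H_elt"
  show "H_mult G (H_mult G x y) w = H_mult G x (H_mult G y w)"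
    unfolding H_mult_def
    by (simp add: grp_mult_assoc V_hom mat_mult_add_left mat_mult_add_right mat_mult_assoc)
       (simp add: mat_add_def add_ac)
next
  fix x y w :: "'g H_elt"
  show "H_mult G (H_add x y) w = H_add (H_mult G x w) (H_mult G y w)"
    unfolding H_mult_def H_add_def
    by (simp add: grp_mult_add_left V_rep_add mat_mult_add_left mat_mult_add_right)
       (simp add: mat_add_def add_ac)
next
  fix x y w :: "'g H_elt"
  show "H_mult G x (H_add y w) = H_add (H_mult G x y) (H_mult G x w)"
    unfolding H_mult_def H_add_def
    by (simp add: grp_mult_add_right V_rep_add mat_mult_add_left mat_mult_add_right)
       (simp add: mat_add_def add_ac)
next
  fix c and x y :: "'g H_elt"
  show "H_mult G (H_smul c x) y = H_smul c (H_mult G x y)"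
    unfolding H_mult_def H_smul_def
    by (simp add: grp_mult_smul_left V_rep_smul mat_mult_smul_left mat_mult_smul_right)
       (simp add: mat_add_def algebra_simps)
next
  fix c and x y :: "'g H_elt"
  show "H_mult G x (H_smul c y) = H_smul c (H_mult G x y)"
    unfolding H_mult_def H_smul_def
    by (simp add: grp_mult_smul_right V_rep_smul mat_mult_smul_left mat_mult_smul_right)
       (simp add: mat_add_def algebra_simps)
qed

end



context fgrp begin

definition hstar :: "'g H_elt \<Rightarrow> 'g H_elt" where "hstar x = (astar (fst x), bstar (snd x))"

lemma astar_zero[simp]: "astar (\<lambda>_. 0) = (\<lambda>_. 0)"
  unfolding astar_def by (simp only: complex_cnj_zero if_cancel)

lemma H_semisimple: "is_semisimple_algebra (H_carrier G) H_zero H_add H_smul (H_mult G)"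
proof (rule semisimple_from_star[OF H_assoc, where star = hstar])
  show "\<forall>x\<in>H_carrier G. hstar x \<in> H_carrier G"
    unfolding hstar_def using cfun_astar imat_bstar by (auto simp: HC_mem)
  show "\<forall>x\<in>H_carrier G. hstar (hstar x) = x"
    unfolding hstar_def using astar_astar by (auto simp: HC_mem)
  show "\<forall>x\<in>H_carrier G. \<forall>y\<in>H_carrier G. hstar (H_mult G x y) = H_mult G (hstar y) (hstar x)"
    unfolding hstar_def H_mult_def
    by (simp add: astar_mult bstar_add bstar_mult bstar_V) (simp add: mat_add_def add_ac)
  show "\<forall>x\<in>H_carrier G. H_mult G x H_zero = H_zero"
    unfolding H_mult_def H_zero_def by simp
  show "\<forall>x\<in>H_carrier G. H_mult G (hstar x) x = H_zero \<longrightarrow> x = H_zero"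
  proof (intro ballI impI)
    fix x assume x: "x \<in> H_carrier G" and e: "H_mult G (hstar x) x = H_zero"
    obtain a b where ab: "x = (a, b)" by (cases x)
    have ca: "cfun a" and ib: "imat b" using x ab HC_mem by auto
    have "grp_mult G (astar a) a = (\<lambda>_. 0)" using e ab unfolding H_mult_def hstar_def H_zero_def by simp
    then have a0: "a = (\<lambda>_. 0)" using pos_A ca by blast
    have "mat_mult G (bstar b) b = (\<lambda>_ _. 0)" using e ab a0 unfolding H_mult_def hstar_def H_zero_def by simp
    then have "b = (\<lambda>_ _. 0)" using pos_B ib by blast
    then show "x = H_zero" using ab a0 unfolding H_zero_def by simp
  qed
qed

lemma H_central: "is_central_subalgebra (H_carrier G) H_zero H_add H_smul (H_mult G)
        {(a, (\<lambda>_ _. 0)) | a. a \<in> A_alg G}"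
  unfolding is_central_subalgebra_def is_subspace_def
proof (intro conjI ballI allI)
  show "{(a, (\<lambda>_ _. 0)) | a. a \<in> A_alg G} \<subseteq> H_carrier G"
    using imat_zero unfolding A_alg_eq by (auto simp: HC_mem)
  show "H_zero \<in> {(a, (\<lambda>_ _. 0)) | a. a \<in> A_alg G}"
    unfolding H_zero_def A_alg_eq using cfun_zero by auto
  fix x y :: "'g H_elt" assume x: "x \<in> {(a, (\<lambda>_ _. 0)) | a. a \<in> A_alg G}"
  then obtain a where a: "x = (a, \<lambda>_ _. 0)" "cfun a" unfolding A_alg_eq by auto
  {
    assume "y \<in> {(a, (\<lambda>_ _. 0)) | a. a \<in> A_alg G}"
    then obtain a' where a': "y = (a', \<lambda>_ _. 0)" "cfun a'" unfolding A_alg_eq by auto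
    show "H_add x y \<in> {(a, (\<lambda>_ _. 0)) | a. a \<in> A_alg G}"
      using a a' cfun_add unfolding A_alg_eq H_add_def by auto
    show "H_mult G x y \<in> {(a, (\<lambda>_ _. 0)) | a. a \<in> A_alg G}"
      using a a' cfun_mult unfolding A_alg_eq H_mult_def by auto
  }
  {
    fix c
    show "H_smul c x \<in> {(a, (\<lambda>_ _. 0)) | a. a \<in> A_alg G}"
      using a cfun_smul unfolding A_alg_eq H_smul_def by auto
  }
  {
    assume "y \<in> H_carrier G"
    then obtain a' b' where y: "y = (a', b')" "cfun a'" "imat b'" using HC_mem by (cases y) auto
    show "H_mult G x y = H_mult G y x"
      using a y cfun_comm[OF a(2), of a'] V_comm[OF y(3), of a] unfolding H_mult_def by simp
  }
qed

lemma ideal_aux: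
  fixes x y :: "'g H_elt" assumes "x \<in> H_carrier G" and y: "y \<in> {((\<lambda>_. 0), b) | b. b \<in> B_alg G}"
  shows "H_mult G x y \<in> {((\<lambda>_. 0), b) | b. b \<in> B_alg G} \<and> H_mult G y x \<in> {((\<lambda>_. 0), b) | b. b \<in> B_alg G}"
proof -
  from assms(1) obtain a' b' where x: "x = (a', b')" "cfun a'" "imat b'" using HC_mem by (cases x) auto
  obtain b where b: "y = (\<lambda>_. 0, b)" "imat b" using y unfolding B_alg_eq by auto
  have "imat (mat_add (mat_mult G (V_rep G a') b) (mat_mult G b' b))"
    using imat_add imat_Vb imat_mult x b by blast
  moreover have "imat (mat_add (mat_mult G b (V_rep G a')) (mat_mult G b b'))"
    using imat_add imat_bV imat_mult x b by blast
  ultimately show "H_mult G x y \<in> {((\<lambda>_. 0), b) | b. b \<in> B_alg G} \<and> H_mult G y x \<in> {((\<lambda>_. 0), b) | b. b \<in> B_alg G}"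
    using x b unfolding H_mult_def B_alg_eq by auto
qed

lemma H_ideal: "is_two_sided_ideal (H_carrier G) H_zero H_add H_smul (H_mult G)
        {((\<lambda>_. 0), b) | b. b \<in> B_alg G}"
  unfolding is_two_sided_ideal_def is_subspace_def
proof (intro conjI ballI allI)
  show "{((\<lambda>_. 0), b) | b. b \<in> B_alg G} \<subseteq> H_carrier G"
    using cfun_zero unfolding B_alg_eq by (auto simp: HC_mem)
  show "H_zero \<in> {((\<lambda>_. 0), b) | b. b \<in> B_alg G}"
    unfolding H_zero_def B_alg_eq using imat_zero by auto
  fix x y :: "'g H_elt" assume x: "x \<in> {((\<lambda>_. 0), b) | b. b \<in> B_alg G}"
  then obtain b where b: "x = (\<lambda>_. 0, b)" "imat b" unfolding B_alg_eq by auto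
  {
    assume "y \<in> {((\<lambda>_. 0), b) | b. b \<in> B_alg G}"
    then obtain b' where b': "y = (\<lambda>_. 0, b')" "imat b'" unfolding B_alg_eq by auto
    show "H_add x y \<in> {((\<lambda>_. 0), b) | b. b \<in> B_alg G}"
      using b b' imat_add unfolding B_alg_eq H_add_def by auto
  }
  {
    fix c
    show "H_smul c x \<in> {((\<lambda>_. 0), b) | b. b \<in> B_alg G}"
      using b imat_smul unfolding B_alg_eq H_smul_def by auto
  }
next
  fix x y :: "'g H_elt" assume "x \<in> H_carrier G" "y \<in> {((\<lambda>_. 0), b) | b. b \<in> B_alg G}"
  then show "H_mult G x y \<in> {((\<lambda>_. 0), b) | b. b \<in> B_alg G}" using ideal_aux by blast
next
  fix x y :: "'g H_elt" assume "x \<in> H_carrier G" "y \<in> {((\<lambda>_. 0), b) | b. b \<in> B_alg G}"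
  then show "H_mult G y x \<in> {((\<lambda>_. 0), b) | b. b \<in> B_alg G}" using ideal_aux by blast
qed

end

theorem lemma2p8:
  fixes G :: "('g, 'm) monoid_scheme"
  assumes "group G" and "finite (carrier G)"
  shows "is_semisimple_algebra (H_carrier G) H_zero H_add H_smul (H_mult G)
    \<and> is_central_subalgebra (H_carrier G) H_zero H_add H_smul (H_mult G)
        {(a, (\<lambda>_ _. 0)) | a. a \<in> A_alg G}
    \<and> is_two_sided_ideal (H_carrier G) H_zero H_add H_smul (H_mult G)
        {((\<lambda>_. 0), b) | b. b \<in> B_alg G}"
proof -
  interpret fgrp G
    using assms by (simp add: fgrp_def fgrp_axioms_def)
  show ?thesis using H_semisimple H_central H_ideal by blast
qed



end
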